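(* Let $q\ge 2$ and let $D$ be a directed graph on $n$ vertices which has an induced acyclic subgraph on at least $n/2$ vertices. If $D$ is $q$-solvable, then $n\ge 2\alpha(q-1)$, where $\alpha\approx 0.567$ is the unique real number satisfying $\alpha+\ln\alpha=0$.
   Context: A directed graph $D=(V,E)$ has arcs $E \subseteq \{(u,v)\in V^2 : u \neq v\}$ (bidirectional pairs allowed). An induced subgraph is acyclic if it contains no directed cycle. $N^-(v)=\{u:(u,v)\in E\}$. For $q\ge2$ let $[q]=\{0,\dots,q-1\}$. A $D$-function over $[q]$ is a map $f=(f_v)_{v\in V}:[q]^V\to[q]^V$ with each $f_v(x)$ depending only on $(x_u)_{u\in N^-(v)}$. $D$ is $q$-solvable if some $D$-function $f$ over $[q]$ has the property that for every $x\in[q]^V$ there is $v$ with $f_v(x)=x_v$. *)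

theory Defs
  imports Complex_Main "HOL-Library.FuncSet"
begin

definition digraph :: "'a set \<Rightarrow> ('a \<times> 'a) set \<Rightarrow> bool" where
  "digraph V E \<longleftrightarrow> finite V \<and> E \<subseteq> V \<times> V \<and> (\<forall>v. (v, v) \<notin> E)"

definition in_nbrs :: "('a \<times> 'a) set \<Rightarrow> 'a \<Rightarrow> 'a set" where
  "in_nbrs E v = {u. (u, v) \<in> E}"

definition configs :: "'a set \<Rightarrow> nat \<Rightarrow> ('a \<Rightarrow> nat) set" where
  "configs V q = V \<rightarrow>\<^sub>E {0..<q}"

definition is_D_function :: "'a set \<Rightarrow> ('a \<times> 'a) set \<Rightarrow> nat \<Rightarrow> ('a \<Rightarrow> ('a \<Rightarrow> nat) \<Rightarrow> nat) \<Rightarrow> bool" where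
  "is_D_function V E q f \<longleftrightarrow>
     (\<forall>v\<in>V. \<forall>x\<in>configs V q. f v x < q) \<and>
     (\<forall>v\<in>V. \<forall>x\<in>configs V q. \<forall>y\<in>configs V q.
        (\<forall>u\<in>in_nbrs E v. x u = y u) \<longrightarrow> f v x = f v y)"

definition q_solvable :: "'a set \<Rightarrow> ('a \<times> 'a) set \<Rightarrow> nat \<Rightarrow> bool" where
  "q_solvable V E q \<longleftrightarrow>
     (\<exists>f. is_D_function V E q f \<and> (\<forall>x\<in>configs V q. \<exists>v\<in>V. f v x = x v))"

definition induced_acyclic :: "('a \<times> 'a) set \<Rightarrow> 'a set \<Rightarrow> bool" where
  "induced_acyclic E S \<longleftrightarrow> acyclic (E \<inter> (S \<times> S))"

definition alpha_const :: real where
  "alpha_const = (THE a. a > 0 \<and> a + ln a = 0)"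

end

theory Submission
  imports Defs
begin

lemma fibre:
  fixes A :: "('a \<Rightarrow> nat) set"
  assumes fin: "finite A" and vV: "v \<in> V" and Asub: "A \<subseteq> configs V q" and q0: "0 < q"
    and inv: "\<And>x c. x \<in> A \<Longrightarrow> c < q \<Longrightarrow> x(v:=c) \<in> A"
    and gi: "\<And>x c. x \<in> A \<Longrightarrow> c < q \<Longrightarrow> g (x(v:=c)) = g x"
    and gq: "\<And>x. x \<in> A \<Longrightarrow> g x < q"
  shows "card {x\<in>A. g x = x v} * q = card A"
proof -
  define A0 where "A0 = {x\<in>A. x v = 0}"
  have xvq: "x v < q" if "x \<in> A" for x
    using Asub that vV unfolding configs_def by (auto simp: PiE_iff)
  have b1: "bij_betw (\<lambda>x. x(v:=0)) {x\<in>A. g x = x v} A0"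
  proof (rule bij_betw_byWitness[where f'="\<lambda>y. y(v:=g y)"])
    show "\<forall>a\<in>{x \<in> A. g x = x v}. (a(v := 0))(v := g (a(v := 0))) = a"
      using gi q0 by fastforce
    show "\<forall>a'\<in>A0. (a'(v := g a'))(v := 0) = a'" unfolding A0_def by auto
    show "(\<lambda>x. x(v := 0)) ` {x \<in> A. g x = x v} \<subseteq> A0" unfolding A0_def using inv q0 by auto
    show "(\<lambda>y. y(v := g y)) ` A0 \<subseteq> {x \<in> A. g x = x v}" unfolding A0_def using inv gq gi by auto
  qed
  have b2: "bij_betw (\<lambda>x. (x(v:=0), x v)) A (A0 \<times> {0..<q})"
    by (rule bij_betw_byWitness[where f'="\<lambda>(y,c). y(v:=c)"]) (use inv q0 xvq in \<open>auto simp: A0_def\<close>)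
  have "card {x\<in>A. g x = x v} = card A0" using bij_betw_same_card[OF b1] .
  moreover have "card A = card A0 * q" using bij_betw_same_card[OF b2] by (simp add: card_cartesian_product)
  ultimately show ?thesis by simp
qed

lemma Dfun_indep:
  assumes Df: "is_D_function V E q f" and u: "u \<in> V" and x: "x \<in> configs V q"
    and vn: "v \<notin> in_nbrs E u" and c: "c < q" and vV: "v \<in> V"
  shows "f u (x(v:=c)) = f u x"
proof -
  have xc: "x(v:=c) \<in> configs V q" using x c vV unfolding configs_def by (auto simp: PiE_iff extensional_def)
  have "\<forall>w\<in>in_nbrs E u. (x(v:=c)) w = x w" using vn by auto
  then show ?thesis using Df u x xc unfolding is_D_function_def by blast
qed

lemma count_W:
  assumes dg: "digraph V E" and Df: "is_D_function V E q f" and q0: "0 < q"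
    and SV: "S \<subseteq> V" and ac: "acyclic (E \<inter> S \<times> S)"
  shows "card {x\<in>configs V q. \<forall>u\<in>S. f u x \<noteq> x u} * q ^ card S = (q-1) ^ card S * q ^ card V"
proof -
  have finV: "finite V" using dg unfolding digraph_def by auto
  have finS: "finite S" using SV finV finite_subset by blast
  have finC: "finite (configs V q)" unfolding configs_def using finV by (simp add: finite_PiE)
  have cardC: "card (configs V q) = q ^ card V" unfolding configs_def using finV by (simp add: card_PiE)
  show ?thesis using finS
  proof (induction S rule: finite_remove_induct)
    case empty then show ?case using cardC by simp
  next
    case (remove A)
    have acA: "acyclic (E \<inter> A \<times> A)" by (rule acyclic_subset[OF ac]) (use remove.hyps(3) in auto)
    have "finite (E \<inter> A \<times> A)" using remove.hyps(1) by (meson finite_Int finite_SigmaI)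
    then have wf: "wf ((E \<inter> A \<times> A)\<inverse>)" using acA by (rule finite_acyclic_wf_converse)
    obtain a where "a \<in> A" using remove.hyps(2) by auto
    from wfE_min[OF wf this] obtain v where vA: "v \<in> A" and
      sink0: "\<And>y. (y, v) \<in> (E \<inter> A \<times> A)\<inverse> \<Longrightarrow> y \<notin> A" by blast
    have sink: "(v, w) \<notin> E" if "w \<in> A" for w using sink0[of w] that vA by blast
    have vV: "v \<in> V" using vA remove.hyps(3) SV by auto
    define A' where "A' = A - {v}"
    define W where "W = {x\<in>configs V q. \<forall>u\<in>A'. f u x \<noteq> x u}"
    have IH: "card W * q ^ card A' = (q-1) ^ card A' * q ^ card V"
      using remove.IH[OF vA] unfolding W_def A'_def .
    have noloop: "(v,v) \<notin> E" using dg unfolding digraph_def by auto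
    have WC: "W \<subseteq> configs V q" unfolding W_def by auto
    have cfg: "x(v:=c) \<in> configs V q" if "x \<in> configs V q" "c < q" for x c
      using that vV unfolding configs_def by (auto simp: PiE_iff extensional_def)
    have inv: "x(v:=c) \<in> W" if "x \<in> W" "c < q" for x c
    proof -
      have "f u (x(v:=c)) = f u x" if "u \<in> A'" for u
        using Dfun_indep[OF Df _ _ _ \<open>c<q\<close> vV, of u x] that \<open>x \<in> W\<close> sink[of u] A'_def remove.hyps(3) SV
        unfolding W_def in_nbrs_def by auto
      then show ?thesis using that cfg unfolding W_def A'_def by auto
    qed
    have gi: "f v (x(v:=c)) = f v x" if "x \<in> W" "c < q" for x c
      using Dfun_indep[OF Df vV _ _ \<open>c<q\<close> vV, of x] that noloop WC unfolding in_nbrs_def by auto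
    have gq: "f v x < q" if "x \<in> W" for x using Df vV that WC unfolding is_D_function_def by auto
    have finW: "finite W" using finC WC finite_subset by blast
    have F: "card {x\<in>W. f v x = x v} * q = card W"
      by (rule fibre[where g="f v", OF finW vV WC q0 inv gi gq])
    have split: "card W = card {x\<in>W. f v x = x v} + card {x\<in>W. f v x \<noteq> x v}"
      using finW by (subst card_Un_disjoint[symmetric]) (auto intro: arg_cong[where f=card])
    have eqA: "{x\<in>configs V q. \<forall>u\<in>A. f u x \<noteq> x u} = {x\<in>W. f v x \<noteq> x v}"
      unfolding W_def A'_def using vA by auto
    have cA: "card A = Suc (card A')" unfolding A'_def using vA remove.hyps(1)
      by (metis card_Suc_Diff1)
    have "card {x\<in>W. f v x \<noteq> x v} * q = (q - 1) * card W"
      using F split q0 by (simp add: algebra_simps diff_mult_distrib)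
    then have "card {x\<in>W. f v x \<noteq> x v} * q * q ^ card A' = (q - 1) * (card W * q ^ card A')"
      by simp
    then show ?case unfolding eqA cA using IH by (simp add: algebra_simps)
  qed
qed

lemma alpha_props: "alpha_const > 0 \<and> alpha_const + ln alpha_const = 0 \<and> alpha_const < 1"
proof -
  have cont: "continuous_on {exp (-1)..1} (\<lambda>x::real. x + ln x)"
  proof (intro continuous_intros ballI)
    fix x :: real assume "x \<in> {exp (-1)..1}"
    then have "x > 0" using exp_gt_zero[of "-1"] by (simp, linarith)
    then show "x \<noteq> 0" by simp
  qed
  have "\<exists>x. exp (-1) \<le> x \<and> x \<le> 1 \<and> x + ln x = (0::real)"
    by (rule IVT'[of "\<lambda>x::real. x + ln x" "exp (-1)" 0 1, OF _ _ _ cont]) auto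
  then obtain a :: real where aa: "exp (-1) \<le> a \<and> a \<le> 1 \<and> a + ln a = 0" ..
  from aa have a0: "exp (-1) \<le> a" by (rule conjunct1)
  from aa have a2: "a + ln a = 0" by (simp only:)
  have a1: "a > 0" using a0 exp_gt_zero[of "-1"] by linarith
  note a = a1 a2
  have uniq: "b = a" if "b > 0" "b + ln b = 0" for b
  proof (rule ccontr)
    assume "b \<noteq> a"
    then consider "b < a" | "a < b" by linarith
    then show False
    proof cases
      case 1 then have "ln b < ln a" using a that by simp
      then show False using a that 1 by linarith
    next
      case 2 then have "ln a < ln b" using a that by simp
      then show False using a that 2 by linarith
    qed
  qed
  have "alpha_const = a" unfolding alpha_const_def
    by (rule the_equality) (use a uniq in \<open>blast+\<close>)
  moreover have "a < 1"
  proof (rule ccontr)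
    assume "\<not> a < 1" then have "ln a \<ge> 0" by simp
    then show False using a \<open>\<not> a < 1\<close> by linarith
  qed
  ultimately show ?thesis using a1 a2 by simp
qed

lemma analytic:
  fixes q s t :: nat
  assumes q2: "q \<ge> 2" and ts: "t \<le> s" and ineq: "(q-1)^s * q \<le> t * q^s"
  shows "real (s + t) \<ge> 2 * alpha_const * (real q - 1)"
proof -
  define a where "a = real q - 1"
  have a1: "a \<ge> 1" using q2 unfolding a_def by simp
  have rq: "real (q - 1) = a" using q2 unfolding a_def by simp
  have t0: "t > 0"
  proof (rule ccontr)
    assume "\<not> t > 0" then have "t = 0" by simp
    then have "(q-1)^s * q = 0" using ineq by simp
    then show False using q2 by simp
  qed
  have R: "a ^ s * (a + 1) \<le> real t * (a+1) ^ s"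
  proof -
    have "real ((q-1)^s * q) \<le> real (t * q^s)" using ineq by linarith
    then show ?thesis unfolding of_nat_mult of_nat_power rq using q2 unfolding a_def by simp
  qed
  have L: "real s * ln a + ln (a+1) \<le> ln t + real s * ln (a+1)"
  proof -
    have "ln (a ^ s * (a + 1)) \<le> ln (real t * (a+1) ^ s)"
    proof -
      have p1: "0 < a^s*(a+1)" using a1 by simp
      have p2: "0 < real t * (a+1)^s" using a1 t0 by simp
      show ?thesis using R p1 p2 by simp
    qed
    then show ?thesis using a1 t0 by (simp add: ln_mult ln_realpow)
  qed
  have lnd: "ln (a+1) - ln a \<le> 1 / a"
  proof -
    have "ln ((a+1)/a) \<le> (a+1)/a - 1" using a1 by (intro ln_le_minus_one) simp
    then show ?thesis using a1 by (simp add: ln_div field_simps)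
  qed
  define \<sigma> where "\<sigma> = real s / a"
  define \<tau> where "\<tau> = real t / a"
  have tau0: "\<tau> > 0" using t0 a1 unfolding \<tau>_def by simp
  have ts': "\<tau> \<le> \<sigma>" using ts a1 unfolding \<tau>_def \<sigma>_def by (simp add: divide_right_mono)
  have key: "\<sigma> + ln \<tau> > 0"
  proof -
    have "real s * (ln (a+1) - ln a) \<le> real s / a"
      using mult_left_mono[OF lnd, of "real s"] by simp
    then have "ln (a+1) - \<sigma> \<le> ln t" using L unfolding \<sigma>_def by (simp add: algebra_simps)
    moreover have "ln a < ln (a+1)" using a1 by simp
    ultimately have "0 < \<sigma> + (ln t - ln a)" by linarith
    then show ?thesis unfolding \<tau>_def using a1 t0 by (simp add: ln_div)
  qed
  define m where "m = (\<sigma> + \<tau>) / 2"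
  have mpos: "m > 0" "\<tau> \<le> m" using tau0 ts' unfolding m_def by auto
  have alpha: "alpha_const > 0" "alpha_const + ln alpha_const = 0" "alpha_const < 1"
    using alpha_props by auto
  have mge: "m \<ge> alpha_const"
  proof (cases "m \<ge> 1")
    case True then show ?thesis using alpha by simp
  next
    case False
    have "ln (\<tau>/m) \<le> \<tau>/m - 1" using tau0 mpos by (intro ln_le_minus_one) simp
    then have h1: "ln \<tau> \<le> ln m + (\<tau> - m) / m" using tau0 mpos by (simp add: ln_div diff_divide_distrib)
    have "(\<tau> - m) / m \<le> \<tau> - m"
    proof -
      have "(\<tau> - m) * 1 \<le> (\<tau> - m) * m" using mpos False by (intro mult_left_mono_neg) linarith+
      then show ?thesis using mpos by (simp add: divide_le_eq)
    qed
    then have "0 < \<sigma> + ln m + \<tau> - m" using key h1 by linarith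
    moreover have "\<sigma> + \<tau> = 2 * m" unfolding m_def by simp
    ultimately have "m + ln m > 0" by linarith
    show ?thesis
    proof (rule ccontr)
      assume "\<not> m \<ge> alpha_const"
      then have "ln m < ln alpha_const" using mpos alpha by simp
      then show False using \<open>m + ln m > 0\<close> \<open>\<not> m \<ge> alpha_const\<close> alpha by linarith
    qed
  qed
  have "real (s + t) = 2 * m * a" unfolding m_def \<sigma>_def \<tau>_def using a1 by (simp add: field_simps)
  then show ?thesis using mge a1 unfolding a_def by (simp add: mult_right_mono)
qed

theorem corollary15:
  fixes V :: "'a set" and E :: "('a \<times> 'a) set" and q :: nat and S :: "'a set"
  assumes "q \<ge> 2"
    and "digraph V E"
    and "S \<subseteq> V" and "induced_acyclic E S" and "real (card S) \<ge> real (card V) / 2"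
    and "q_solvable V E q"
  shows "real (card V) \<ge> 2 * alpha_const * (real q - 1)"
proof -
  note q2 = assms(1) and dg = assms(2) and SV = assms(3)
  obtain f where Df: "is_D_function V E q f" and sol: "\<forall>x\<in>configs V q. \<exists>v\<in>V. f v x = x v"
    using assms(6) unfolding q_solvable_def by blast
  have q0: "0 < q" using q2 by simp
  have finV: "finite V" using dg unfolding digraph_def by auto
  have finS: "finite S" using SV finV finite_subset by blast
  have finC: "finite (configs V q)" unfolding configs_def using finV by (simp add: finite_PiE)
  have cardC: "card (configs V q) = q ^ card V" unfolding configs_def using finV by (simp add: card_PiE)
  define s where "s = card S"
  define t where "t = card (V - S)"
  have c1: "card (V - S) = card V - card S" using card_Diff_subset[OF finS SV] .
  have c2: "card S \<le> card V" using card_mono[OF finV SV] .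
  have nst: "card V = s + t" unfolding s_def t_def using c1 c2 by linarith
  have ts: "t \<le> s" using assms(5) nst unfolding s_def by linarith
  define W where "W = {x\<in>configs V q. \<forall>u\<in>S. f u x \<noteq> x u}"
  have cW: "card W * q ^ s = (q-1) ^ s * q ^ card V"
    unfolding W_def s_def
    by (rule count_W[OF dg Df q0 SV]) (use assms(4) in \<open>simp add: induced_acyclic_def\<close>)
  define B where "B v = {x\<in>configs V q. f v x = x v}" for v
  have WB: "W \<subseteq> (\<Union>v\<in>V-S. B v)" unfolding W_def B_def using sol by blast
  have cB: "card (B v) * q = q ^ card V" if vV: "v \<in> V" for v
  proof -
    have noloop: "(v,v) \<notin> E" using dg unfolding digraph_def by auto
    have "card {x\<in>configs V q. f v x = x v} * q = card (configs V q)"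
    proof (rule fibre[OF finC vV subset_refl q0, where g="f v"])
      show "x(v:=c) \<in> configs V q" if "x \<in> configs V q" "c < q" for x c
        using that vV unfolding configs_def by (auto simp: PiE_iff extensional_def)
      show "f v (x(v:=c)) = f v x" if "x \<in> configs V q" "c < q" for x c
        using Dfun_indep[OF Df vV _ _ \<open>c<q\<close> vV, of x] that noloop unfolding in_nbrs_def by auto
      show "f v x < q" if "x \<in> configs V q" for x using Df vV that unfolding is_D_function_def by blast
    qed
    then show ?thesis unfolding B_def cardC .
  qed
  have "card W \<le> card (\<Union>v\<in>V-S. B v)"
    using WB by (intro card_mono) (auto simp: B_def finC finV)
  also have "\<dots> \<le> (\<Sum>v\<in>V-S. card (B v))" by (rule card_UN_le) (use finV in auto)
  finally have "card W * q \<le> (\<Sum>v\<in>V-S. card (B v)) * q" by simp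
  also have "\<dots> = (\<Sum>v\<in>V-S. card (B v) * q)" by (simp add: sum_distrib_right)
  also have "\<dots> = (\<Sum>v\<in>V-S. q ^ card V)" using cB by (intro sum.cong) auto
  also have "\<dots> = t * q ^ card V" unfolding t_def by simp
  finally have le1: "card W * q \<le> t * q ^ card V" .
  have "(q-1) ^ s * q * q ^ card V = card W * q * q ^ s" using cW by (simp add: algebra_simps)
  also have "\<dots> \<le> t * q ^ card V * q ^ s" using le1 by simp
  finally have "((q-1) ^ s * q) * q ^ card V \<le> (t * q ^ s) * q ^ card V" by (simp add: algebra_simps)
  then have ineq: "(q-1) ^ s * q \<le> t * q ^ s" using q0 by simp
  show ?thesis using analytic[OF q2 ts ineq] nst by simp
qed

end
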